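(* For integers $m\ge1$, $0\le p\le m$ and real $c\ge0$, with $P_{c,p}(m)$ as defined in the context, $$P_{c,p}(m)=\int_{\mathbb R_+^m}\Big(\prod_{1\le i\le j\le m}\ \sum_{k=i}^j\lambda_k\Big)\exp\Big(-\sum_{j=1}^p j\lambda_j-\sum_{j=p+1}^m(j+c)\lambda_j\Big)\,d\lambda .$$
   Context: $$P_{c,p}(m)=\int_{Y_p}\Big|\prod_{j=1}^m\lambda_j\Big|\,\Delta(\lambda)\,e^{-\sum_{j=1}^{m-1}\lambda_j}\,G_{c,p}(\lambda_m)\,d\lambda,\qquad G_{c,p}(\lambda_m)=\begin{cases}e^{(m+c)\lambda_m},&p<m,\\ e^{-\lambda_m},&p=m,\end{cases}$$ where $Y_p=\{\lambda\in\mathbb R^m:\lambda_1>\dots>\lambda_p>0>\lambda_{p+1}>\dots>\lambda_m\}$, $\Delta(\lambda)=\prod_{1\le i<j\le m}(\lambda_i-\lambda_j)$, and $\mathbb R_+=(0,\infty)$. *)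

theory Defs
  imports "HOL-Analysis.Analysis"
begin

text \<open>Points of R^m are functions on the index set {1..m} (extensional), with
  Lebesgue measure given as the product measure of m copies of lborel.\<close>

definition leb_m :: "nat \<Rightarrow> (nat \<Rightarrow> real) measure" where
  "leb_m m = PiM {1..m} (\<lambda>_. lborel)"

definition Ychamber :: "nat \<Rightarrow> nat \<Rightarrow> (nat \<Rightarrow> real) set" where
  "Ychamber m p = {l \<in> PiE {1..m} (\<lambda>_. UNIV).
      (\<forall>i. 1 \<le> i \<and> i < m \<longrightarrow> l (Suc i) < l i) \<and>
      (\<forall>i. 1 \<le> i \<and> i \<le> p \<longrightarrow> 0 < l i) \<and>
      (\<forall>i. p < i \<and> i \<le> m \<longrightarrow> l i < 0)}"

definition vdm :: "nat \<Rightarrow> (nat \<Rightarrow> real) \<Rightarrow> real" where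
  "vdm m l = (\<Prod>i\<in>{1..m}. \<Prod>j\<in>{i<..m}. (l i - l j))"

definition Gfun :: "real \<Rightarrow> nat \<Rightarrow> nat \<Rightarrow> real \<Rightarrow> real" where
  "Gfun c p m x = (if p < m then exp ((real m + c) * x) else exp (- x))"

definition Pcp :: "real \<Rightarrow> nat \<Rightarrow> nat \<Rightarrow> real" where
  "Pcp c p m = (LINT l : Ychamber m p | leb_m m.
      \<bar>\<Prod>j\<in>{1..m}. l j\<bar> * vdm m l * exp (- (\<Sum>j\<in>{1..m-1}. l j)) * Gfun c p m (l m))"

end

theory Submission imports Defs begin


abbreviation LL :: "nat \<Rightarrow> real measure" where "LL \<equiv> (\<lambda>_. lborel)"

interpretation LLp: product_sigma_finite LL
  by standard

lemma sf_PiM: "finite I \<Longrightarrow> sigma_finite_measure (PiM I LL)"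
proof -
  assume fin: "finite I"
  interpret finite_product_sigma_finite LL I by standard fact
  show ?thesis by (rule sigma_finite_measure_axioms)
qed

lemma add_dim_distr:
  assumes fin: "finite I" and a: "a \<notin> I"
  shows "distr (PiM I LL \<Otimes>\<^sub>M lborel) (PiM (insert a I) LL) (\<lambda>(f,y). f(a:=y)) = PiM (insert a I) LL"
proof (rule LLp.PiM_eqI)
  interpret I: finite_product_sigma_finite LL I by standard fact
  fix A assume A: "\<And>i. i \<in> insert a I \<Longrightarrow> A i \<in> sets (LL i)"
  have *: "(\<lambda>(f,y). f(a:=y)) -` Pi\<^sub>E (insert a I) A \<inter> space (PiM I LL \<Otimes>\<^sub>M lborel) = Pi\<^sub>E I A \<times> A a"
    using a by (auto simp: space_PiM space_pair_measure PiE_def Pi_def extensional_def split: if_splits)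
  show "emeasure (distr (PiM I LL \<Otimes>\<^sub>M lborel) (PiM (insert a I) LL) (\<lambda>(f,y). f(a:=y))) (Pi\<^sub>E (insert a I) A) =
      (\<Prod>i\<in>insert a I. emeasure (LL i) (A i))"
    apply (subst emeasure_distr)
    using A fin a
    by (auto simp: * lborel.emeasure_pair_measure_Times I.measure_times mult.commute intro!: sets_PiM_I_finite)
qed (use fin in simp_all)

lemma shear_distr:
  assumes sf: "sigma_finite_measure N" and h[measurable]: "h \<in> borel_measurable N" and s: "\<bar>s\<bar> = (1::real)"
  shows "distr (N \<Otimes>\<^sub>M lborel) (N \<Otimes>\<^sub>M lborel) (\<lambda>(f,y). (f, s * y + h f)) = N \<Otimes>\<^sub>M lborel"
proof (rule measure_eqI)
  interpret N: sigma_finite_measure N by fact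
  have sne: "s \<noteq> 0" using s by auto
  have meas: "(\<lambda>(f,y). (f, s * y + h f)) \<in> measurable (N \<Otimes>\<^sub>M lborel) (N \<Otimes>\<^sub>M lborel)"
    by measurable
  fix A assume A: "A \<in> sets (distr (N \<Otimes>\<^sub>M lborel) (N \<Otimes>\<^sub>M lborel) (\<lambda>(f,y). (f, s * y + h f)))"
  then have A': "A \<in> sets (N \<Otimes>\<^sub>M lborel)" by simp
  have aff: "\<And>t. lborel = distr lborel borel (\<lambda>x. t + s * x)"
    using lborel_real_affine[OF sne] s by (simp add: density_1)
  have "emeasure (distr (N \<Otimes>\<^sub>M lborel) (N \<Otimes>\<^sub>M lborel) (\<lambda>(f,y). (f, s * y + h f))) A
      = emeasure (N \<Otimes>\<^sub>M lborel) ((\<lambda>(f,y). (f, s * y + h f)) -` A \<inter> space (N \<Otimes>\<^sub>M lborel))"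
    by (rule emeasure_distr[OF meas A'])
  also have "\<dots> = (\<integral>\<^sup>+x. emeasure lborel (Pair x -` ((\<lambda>(f,y). (f, s * y + h f)) -` A \<inter> space (N \<Otimes>\<^sub>M lborel))) \<partial>N)"
    by (rule lborel.emeasure_pair_measure_alt) (use meas A' in measurable)
  also have "\<dots> = (\<integral>\<^sup>+x. emeasure lborel (Pair x -` A) \<partial>N)"
  proof (rule nn_integral_cong)
    fix x assume x: "x \<in> space N"
    have "Pair x -` ((\<lambda>(f,y). (f, s * y + h f)) -` A \<inter> space (N \<Otimes>\<^sub>M lborel))
        = (\<lambda>y. h x + s * y) -` (Pair x -` A) \<inter> space lborel"
      using x by (auto simp: space_pair_measure add.commute)
    moreover have "emeasure lborel (Pair x -` A) = emeasure lborel ((\<lambda>y. h x + s * y) -` (Pair x -` A) \<inter> space lborel)"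
      apply (subst aff[of "h x"])
      apply (subst emeasure_distr)
      using A' by (auto intro: sets_Pair1)
    ultimately show "emeasure lborel (Pair x -` ((\<lambda>(f,y). (f, s * y + h f)) -` A \<inter> space (N \<Otimes>\<^sub>M lborel))) = emeasure lborel (Pair x -` A)"
      by simp
  qed
  also have "\<dots> = emeasure (N \<Otimes>\<^sub>M lborel) A"
    by (rule lborel.emeasure_pair_measure_alt[symmetric, OF A'])
  finally show "emeasure (distr (N \<Otimes>\<^sub>M lborel) (N \<Otimes>\<^sub>M lborel) (\<lambda>(f,y). (f, s * y + h f))) A = emeasure (N \<Otimes>\<^sub>M lborel) A" .
qed simp

lemma map1_distr:
  assumes T[measurable]: "T \<in> measurable N N" and D: "distr N N T = N"
  shows "distr (N \<Otimes>\<^sub>M lborel) (N \<Otimes>\<^sub>M lborel) (\<lambda>(f,y). (T f, y)) = N \<Otimes>\<^sub>M lborel"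
proof -
  have "distr N N T \<Otimes>\<^sub>M distr lborel lborel (\<lambda>y. y) = distr (N \<Otimes>\<^sub>M lborel) (N \<Otimes>\<^sub>M lborel) (\<lambda>(x, y). (T x, y))"
    by (rule pair_measure_distr) (auto simp: lborel.sigma_finite_measure_axioms)
  then have "N \<Otimes>\<^sub>M lborel = distr (N \<Otimes>\<^sub>M lborel) (N \<Otimes>\<^sub>M lborel) (\<lambda>(x, y). (T x, y))" using D by simp
  then show ?thesis by (rule sym)
qed

lemma ins_shear:
  assumes fin: "finite I" and a: "a \<notin> I"
    and T'[measurable]: "T' \<in> measurable (PiM I LL) (PiM I LL)"
    and D: "distr (PiM I LL) (PiM I LL) T' = PiM I LL"
    and h[measurable]: "h \<in> borel_measurable (PiM I LL)" and s: "\<bar>s\<bar> = 1"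
  shows "(\<lambda>x. (T' (restrict x I))(a := s * x a + h (restrict x I))) \<in> measurable (PiM (insert a I) LL) (PiM (insert a I) LL)
    \<and> distr (PiM (insert a I) LL) (PiM (insert a I) LL) (\<lambda>x. (T' (restrict x I))(a := s * x a + h (restrict x I))) = PiM (insert a I) LL"
proof -
  let ?P = "PiM (insert a I) LL" and ?N = "PiM I LL"
  let ?F = "\<lambda>x. (T' (restrict x I))(a := s * x a + h (restrict x I))"
  let ?Q = "?N \<Otimes>\<^sub>M (lborel::real measure)"
  let ?ins = "\<lambda>(f,y). f(a:=y)"
  let ?S1 = "\<lambda>(f,y). (f, s * y + h f)"
  let ?S2 = "\<lambda>(f,y). (T' f, y)"
  interpret N: sigma_finite_measure ?N by (rule sf_PiM[OF fin])
  have r[measurable]: "(\<lambda>x. restrict x I) \<in> measurable ?P ?N" by (rule measurable_restrict_subset) auto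
  have m1: "(\<lambda>x. T' (restrict x I)) \<in> measurable ?P ?N" by measurable
  have m2: "(\<lambda>x. s * x a + h (restrict x I)) \<in> borel_measurable ?P" by measurable
  have Fm: "?F \<in> measurable ?P ?P"
    by (rule measurable_fun_upd[where J=I, OF _ m1]) (use m2 in auto)
  have insm: "?ins \<in> measurable ?Q ?P" by (rule measurable_add_dim)
  have S1m: "?S1 \<in> measurable ?Q ?Q" by measurable
  have S2m: "?S2 \<in> measurable ?Q ?Q" by measurable
  have S: "distr ?Q ?Q (?S2 \<circ> ?S1) = ?Q"
  proof -
    have "distr ?Q ?Q (?S2 \<circ> ?S1)
      = distr (distr ?Q ?Q ?S1) ?Q ?S2"
      by (rule distr_distr[symmetric, OF S2m S1m])
    also have "\<dots> = distr ?Q ?Q ?S2"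
      using shear_distr[OF N.sigma_finite_measure_axioms h s] by simp
    also have "\<dots> = ?Q" by (rule map1_distr[OF T' D])
    finally show ?thesis .
  qed
  have "distr ?P ?P ?F = distr (distr ?Q ?P ?ins) ?P ?F"
    by (simp add: add_dim_distr[OF fin a])
  also have "\<dots> = distr ?Q ?P (?F \<circ> ?ins)"
    by (rule distr_distr[OF Fm insm])
  also have "\<dots> = distr ?Q ?P (?ins \<circ> (?S2 \<circ> ?S1))"
  proof (rule distr_cong)
    fix w assume w: "w \<in> space ?Q"
    then obtain f and y :: real where wf: "w = (f, y)" and f: "f \<in> PiE I (\<lambda>_. UNIV)"
      by (auto simp: space_pair_measure space_PiM)
    have "restrict (f(a:=y)) I = f"
      using a f by (simp add: restrict_fupd PiE_restrict)
    then show "(?F \<circ> ?ins) w = (?ins \<circ> (?S2 \<circ> ?S1)) w" by (simp add: wf)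
  qed simp_all
  also have "\<dots> = distr (distr ?Q ?Q (?S2 \<circ> ?S1)) ?P ?ins"
    by (rule distr_distr[symmetric, OF insm]) (rule measurable_comp[OF S1m S2m])
  also have "\<dots> = ?P" unfolding S by (rule add_dim_distr[OF fin a])
  finally show ?thesis using Fm by simp
qed

definition Tab :: "nat \<Rightarrow> nat \<Rightarrow> nat \<Rightarrow> (nat \<Rightarrow> real) \<Rightarrow> (nat \<Rightarrow> real)" where
  "Tab a b p x = restrict (\<lambda>k. if k \<le> p then (\<Sum>i\<in>{k..p}. x i) else - (\<Sum>i\<in>{Suc p..k}. x i)) {a..b}"

lemma Tab_pres_aux:
  "\<forall>a b. Suc b - a = n \<longrightarrow> a \<le> Suc p \<longrightarrow> p \<le> b \<longrightarrow>
     Tab a b p \<in> measurable (PiM {a..b} LL) (PiM {a..b} LL) \<and> distr (PiM {a..b} LL) (PiM {a..b} LL) (Tab a b p) = PiM {a..b} LL"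
proof (induction n)
  case 0
  show ?case
  proof (intro allI impI)
    fix a b assume h: "Suc b - a = 0" "a \<le> Suc p" "p \<le> b"
    then have e: "{a..b} = {}" by auto
    have eq: "\<And>x. x \<in> space (PiM {a..b} LL) \<Longrightarrow> Tab a b p x = x"
      unfolding e by (auto simp: Tab_def space_PiM_empty e)
    have "Tab a b p \<in> measurable (PiM {a..b} LL) (PiM {a..b} LL)"
      proof -
        have "Tab a b p \<in> measurable (PiM {a..b} LL) (PiM {a..b} LL) \<longleftrightarrow> (\<lambda>x. x) \<in> measurable (PiM {a..b} LL) (PiM {a..b} LL)"
          by (rule measurable_cong, rule eq, assumption)
        then show ?thesis by simp
      qed
    moreover have "distr (PiM {a..b} LL) (PiM {a..b} LL) (Tab a b p) = PiM {a..b} LL"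
      proof -
        have "distr (PiM {a..b} LL) (PiM {a..b} LL) (Tab a b p) = distr (PiM {a..b} LL) (PiM {a..b} LL) (\<lambda>x. x)"
          by (rule distr_cong, rule refl, rule refl, rule eq, assumption)
        then show ?thesis by simp
      qed
    ultimately show "Tab a b p \<in> measurable (PiM {a..b} LL) (PiM {a..b} LL) \<and> distr (PiM {a..b} LL) (PiM {a..b} LL) (Tab a b p) = PiM {a..b} LL" ..
  qed
next
  case (Suc n)
  show ?case
  proof (intro allI impI)
    fix a b assume h: "Suc b - a = Suc n" "a \<le> Suc p" "p \<le> b"
    then have ab: "a \<le> b" by auto
    show "Tab a b p \<in> measurable (PiM {a..b} LL) (PiM {a..b} LL) \<and> distr (PiM {a..b} LL) (PiM {a..b} LL) (Tab a b p) = PiM {a..b} LL"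
    proof (cases "a \<le> p")
      case True
      let ?I = "{Suc a..b}"
      have IH: "Tab (Suc a) b p \<in> measurable (PiM ?I LL) (PiM ?I LL) \<and> distr (PiM ?I LL) (PiM ?I LL) (Tab (Suc a) b p) = PiM ?I LL"
        using Suc.IH h True by auto
      have hm: "(\<lambda>f. \<Sum>i\<in>{Suc a..p}. f i) \<in> borel_measurable (PiM ?I LL)"
        by (rule borel_measurable_sum) (use h in auto)
      have ins: "insert a ?I = {a..b}" using ab by auto
      have nI: "a \<notin> ?I" by simp
      note R = ins_shear[OF finite_atLeastAtMost nI IH[THEN conjunct1] IH[THEN conjunct2] hm, of 1, unfolded ins]
      let ?F = "\<lambda>x. (Tab (Suc a) b p (restrict x ?I))(a := 1 * x a + (\<Sum>i\<in>{Suc a..p}. restrict x ?I i))"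
      have eq: "Tab a b p x = ?F x"
        if x: "x \<in> space (PiM {a..b} LL)" for x
      proof (rule ext)
        fix k
        have s1: "(\<Sum>i\<in>{Suc a..p}. restrict x ?I i) = (\<Sum>i\<in>{Suc a..p}. x i)"
          by (rule sum.cong) (use h in auto)
        show "Tab a b p x k = ?F x k"
        proof (cases "k = a")
          case True
          then show ?thesis using \<open>a \<le> p\<close> ab
            apply (simp add: Tab_def sum.atLeast_Suc_atMost)
            apply (rule sum.cong) using h by auto
        next
          case False
          have s2: "(\<Sum>i\<in>{k..p}. restrict x ?I i) = (\<Sum>i\<in>{k..p}. x i)" if "Suc a \<le> k" 
            by (rule sum.cong) (use h that in auto)
          have s3: "(\<Sum>i\<in>{Suc p..k}. restrict x ?I i) = (\<Sum>i\<in>{Suc p..k}. x i)" if "k \<le> b"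
            by (rule sum.cong) (use h that True in auto)
          show ?thesis using False s2 s3 by (auto simp: Tab_def)
        qed
      qed
      have m: "Tab a b p \<in> measurable (PiM {a..b} LL) (PiM {a..b} LL)"
        proof -
        have "Tab a b p \<in> measurable (PiM {a..b} LL) (PiM {a..b} LL) \<longleftrightarrow> ?F \<in> measurable (PiM {a..b} LL) (PiM {a..b} LL)"
          by (rule measurable_cong, rule eq, assumption)
        then show ?thesis using R by simp
      qed
      have d: "distr (PiM {a..b} LL) (PiM {a..b} LL) (Tab a b p) = PiM {a..b} LL"
        proof -
        have "distr (PiM {a..b} LL) (PiM {a..b} LL) (Tab a b p) = distr (PiM {a..b} LL) (PiM {a..b} LL) ?F"
          by (rule distr_cong, rule refl, rule refl, rule eq, assumption)
        then show ?thesis using R by simp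
      qed
      show ?thesis using m d by blast
    next
      case False
      then have ap: "a = Suc p" using h by auto
      then obtain b' where b': "b = Suc b'" using ab by (cases b) auto
      let ?I = "{a..b'}"
      have IH: "Tab a b' p \<in> measurable (PiM ?I LL) (PiM ?I LL) \<and> distr (PiM ?I LL) (PiM ?I LL) (Tab a b' p) = PiM ?I LL"
        using Suc.IH h b' ap ab by auto
      have hm: "(\<lambda>f. - (\<Sum>i\<in>{Suc p..b'}. f i)) \<in> borel_measurable (PiM ?I LL)"
        by (intro borel_measurable_uminus borel_measurable_sum) (use ap in auto)
      have ins: "insert b ?I = {a..b}" using ab b' by auto
      have nI: "b \<notin> ?I" using b' by simp
      note R = ins_shear[OF finite_atLeastAtMost nI IH[THEN conjunct1] IH[THEN conjunct2] hm, of "-1", unfolded ins]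
      let ?F = "\<lambda>x. (Tab a b' p (restrict x ?I))(b := -1 * x b + - (\<Sum>i\<in>{Suc p..b'}. restrict x ?I i))"
      have eq: "Tab a b p x = ?F x"
        if x: "x \<in> space (PiM {a..b} LL)" for x
      proof (rule ext)
        fix k
        have s1: "(\<Sum>i\<in>{Suc p..b'}. restrict x ?I i) = (\<Sum>i\<in>{Suc p..b'}. x i)"
          by (rule sum.cong) (use ap in auto)
        show "Tab a b p x k = ?F x k"
        proof (cases "k = b")
          case True
          then show ?thesis using ap ab b' by (simp add: Tab_def s1)
        next
          case False
          have s3: "(\<Sum>i\<in>{Suc p..k}. restrict x ?I i) = (\<Sum>i\<in>{Suc p..k}. x i)" if "k \<le> b'"
            by (rule sum.cong) (use ap that in auto)
          show ?thesis using False s3 ap b' by (auto simp: Tab_def)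
        qed
      qed
      have m: "Tab a b p \<in> measurable (PiM {a..b} LL) (PiM {a..b} LL)"
        proof -
        have "Tab a b p \<in> measurable (PiM {a..b} LL) (PiM {a..b} LL) \<longleftrightarrow> ?F \<in> measurable (PiM {a..b} LL) (PiM {a..b} LL)"
          by (rule measurable_cong, rule eq, assumption)
        then show ?thesis using R by simp
      qed
      have d: "distr (PiM {a..b} LL) (PiM {a..b} LL) (Tab a b p) = PiM {a..b} LL"
        proof -
        have "distr (PiM {a..b} LL) (PiM {a..b} LL) (Tab a b p) = distr (PiM {a..b} LL) (PiM {a..b} LL) ?F"
          by (rule distr_cong, rule refl, rule refl, rule eq, assumption)
        then show ?thesis using R by simp
      qed
      show ?thesis using m d by blast
    qed
  qed
qed

lemma Tab_pres:
  assumes "a \<le> Suc p" "p \<le> b"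
  shows "Tab a b p \<in> measurable (PiM {a..b} LL) (PiM {a..b} LL)"
    "distr (PiM {a..b} LL) (PiM {a..b} LL) (Tab a b p) = PiM {a..b} LL"
  using Tab_pres_aux[of "Suc b - a" p] assms by auto



definition Xf :: "nat \<Rightarrow> nat \<Rightarrow> (nat \<Rightarrow> real) \<Rightarrow> nat \<Rightarrow> real" where
  "Xf m p v k = (\<Sum>i\<in>{Suc k..m}. v i) - (\<Sum>i\<in>{Suc p..m}. v i)"

definition sg :: "nat \<Rightarrow> nat \<Rightarrow> nat" where
  "sg p k = (if k \<le> p then k - 1 else k)"

definition tau :: "nat \<Rightarrow> nat \<Rightarrow> nat" where
  "tau p k = (if k = 0 then p else sg p k)"

lemma sum_split3:
  assumes "a \<le> Suc c" "c \<le> b"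
  shows "sum f {a..b} = sum f {a..c} + sum f {Suc c..b}"
proof -
  have "{a..b} = {a..c} \<union> {Suc c..b}" using assms by auto
  then show ?thesis by (simp add: sum.union_disjoint ivl_disj_int)
qed

lemma T_eq:
  assumes "p \<le> m" "k \<in> {1..m}"
  shows "Tab 1 m p v k = Xf m p v (sg p k)"
proof (cases "k \<le> p")
  case True
  have "sum v {k..m} = sum v {k..p} + sum v {Suc p..m}"
    by (rule sum_split3) (use assms True in auto)
  then show ?thesis using assms True by (simp add: Tab_def Xf_def sg_def)
next
  case False
  have "sum v {Suc p..m} = sum v {Suc p..k} + sum v {Suc k..m}"
    by (rule sum_split3) (use assms False in auto)
  then show ?thesis using assms False by (simp add: Tab_def Xf_def sg_def)
qed

lemma X_diff:
  assumes "k \<le> l" "l \<le> m"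
  shows "Xf m p v k - Xf m p v l = (\<Sum>i\<in>{Suc k..l}. v i)"
proof -
  have "sum v {Suc k..m} = sum v {Suc k..l} + sum v {Suc l..m}"
    by (rule sum_split3) (use assms in auto)
  then show ?thesis by (simp add: Xf_def)
qed

lemma X_mono:
  assumes pos: "\<forall>i\<in>{1..m}. 0 < v i" and "k < l" "l \<le> m"
  shows "Xf m p v l < Xf m p v k"
proof -
  have "0 < (\<Sum>i\<in>{Suc k..l}. v i)"
    by (rule sum_pos) (use assms in auto)
  then show ?thesis using X_diff[of k l m p v] assms by simp
qed

lemma Xp[simp]: "Xf m p v p = 0" by (simp add: Xf_def)

lemma sg_mono: "1 \<le> i \<Longrightarrow> i < j \<Longrightarrow> sg p i < sg p j"
  by (auto simp: sg_def)

lemma sg_le: "j \<le> m \<Longrightarrow> sg p j \<le> m"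
  by (auto simp: sg_def)

lemma tau_inj: "inj_on (tau p) {0..m}"
  by (auto simp: inj_on_def tau_def sg_def split: if_splits)

lemma tau_img: assumes "p \<le> m" shows "tau p ` {0..m} = {0..m}"
proof
  show "tau p ` {0..m} \<subseteq> {0..m}" using assms by (auto simp: tau_def sg_def)
  show "{0..m} \<subseteq> tau p ` {0..m}"
  proof
    fix y assume y: "y \<in> {0..m}"
    show "y \<in> tau p ` {0..m}"
    proof (cases "y = p")
      case True then show ?thesis by (intro image_eqI[of _ _ 0]) (auto simp: tau_def)
    next
      case False
      show ?thesis
      proof (cases "y < p")
        case True then show ?thesis using assms by (intro image_eqI[of _ _ "Suc y"]) (auto simp: tau_def sg_def)
      next
        case False then show ?thesis using y \<open>y \<noteq> p\<close> by (intro image_eqI[of _ _ y]) (auto simp: tau_def sg_def)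
      qed
    qed
  qed
qed

definition QQ :: "(nat \<Rightarrow> real) \<Rightarrow> nat set \<Rightarrow> real" where
  "QQ w S = (\<Prod>i\<in>S. \<Prod>j\<in>S - {i}. \<bar>w i - w j\<bar>)"

definition HH :: "(nat \<Rightarrow> real) \<Rightarrow> nat set \<Rightarrow> real" where
  "HH w S = (\<Prod>i\<in>S. \<Prod>j\<in>{j\<in>S. i < j}. \<bar>w i - w j\<bar>)"

lemma HH_sq: assumes fin: "finite S" shows "(HH w S)^2 = QQ w S"
proof -
  have split: "\<And>i. S - {i} = {j\<in>S. j < i} \<union> {j\<in>S. i < j}" by auto
  have "QQ w S = (\<Prod>i\<in>S. (\<Prod>j\<in>{j\<in>S. j < i}. \<bar>w i - w j\<bar>) * (\<Prod>j\<in>{j\<in>S. i < j}. \<bar>w i - w j\<bar>))"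
    unfolding QQ_def split using fin by (intro prod.cong refl prod.union_disjoint) auto
  also have "\<dots> = (\<Prod>i\<in>S. \<Prod>j\<in>{j\<in>S. j < i}. \<bar>w i - w j\<bar>) * HH w S"
    by (simp add: prod.distrib HH_def)
  also have "(\<Prod>i\<in>S. \<Prod>j\<in>{j\<in>S. j < i}. \<bar>w i - w j\<bar>) = (\<Prod>j\<in>S. \<Prod>i\<in>{i\<in>S. j < i}. \<bar>w i - w j\<bar>)"
    by (rule prod.swap_restrict[OF fin fin])
  also have "\<dots> = HH w S" unfolding HH_def by (intro prod.cong refl) (simp add: abs_minus_commute)
  finally show ?thesis by (simp add: power2_eq_square)
qed

lemma QQ_reindex: assumes inj: "inj_on t S" shows "QQ (\<lambda>k. w (t k)) S = QQ w (t ` S)"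
proof -
  have "QQ w (t ` S) = (\<Prod>i\<in>S. \<Prod>j\<in>t ` S - {t i}. \<bar>w (t i) - w j\<bar>)"
    unfolding QQ_def by (subst prod.reindex[OF inj]) simp
  also have "\<dots> = (\<Prod>i\<in>S. \<Prod>j\<in>t ` (S - {i}). \<bar>w (t i) - w j\<bar>)"
  proof (rule prod.cong[OF refl])
    fix i assume i: "i \<in> S"
    have "t ` S - {t i} = t ` (S - {i})" using inj i by (auto simp: inj_on_def)
    then show "(\<Prod>j\<in>t ` S - {t i}. \<bar>w (t i) - w j\<bar>) = (\<Prod>j\<in>t ` (S - {i}). \<bar>w (t i) - w j\<bar>)" by simp
  qed
  also have "\<dots> = QQ (\<lambda>k. w (t k)) S"
    unfolding QQ_def
  proof (rule prod.cong[OF refl])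
    fix i assume i: "i \<in> S"
    have "inj_on t (S - {i})" using inj by (rule inj_on_subset) auto
    then show "(\<Prod>j\<in>t ` (S - {i}). \<bar>w (t i) - w j\<bar>) = (\<Prod>j\<in>S - {i}. \<bar>w (t i) - w (t j)\<bar>)"
      by (simp add: prod.reindex)
  qed
  finally show ?thesis by simp
qed

lemma D_sum: "(\<Sum>k\<in>{0..m}. \<Sum>i\<in>{Suc k..m}. v i) = (\<Sum>i\<in>{1..m}. real i * v i)"
proof (induction m)
  case 0 then show ?case by simp
next
  case (Suc m)
  have "(\<Sum>k\<in>{0..Suc m}. \<Sum>i\<in>{Suc k..Suc m}. v i) = (\<Sum>k\<in>{0..m}. (\<Sum>i\<in>{Suc k..m}. v i) + v (Suc m))"
    by (simp add: sum.atLeast0_atMost_Suc; intro sum.cong refl; simp add: sum.cl_ivl_Suc)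
  also have "\<dots> = (\<Sum>i\<in>{1..m}. real i * v i) + real (Suc m) * v (Suc m)"
    by (simp add: sum.distrib Suc.IH)
  also have "\<dots> = (\<Sum>i\<in>{1..Suc m}. real i * v i)" by (simp add: sum.cl_ivl_Suc)
  finally show ?case .
qed



lemma Ych_meas: assumes pm: "p \<le> m" shows "Ychamber m p \<in> sets (leb_m m)"
proof -
  let ?M = "PiM {1..m} LL"
  have P: "Measurable.pred ?M (\<lambda>l. (\<forall>i\<in>{1..<m}. l (Suc i) < l i) \<and> (\<forall>i\<in>{1..p}. 0 < l i) \<and> (\<forall>i\<in>{p<..m}. l i < 0))"
  proof (intro pred_intros_logic pred_intros_finite)
    fix i show "finite {1..<m}" "finite {1..p}" "finite {p<..m}" by auto
  next
    fix i assume i: "i \<in> {1..<m}"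
    have [measurable]: "(\<lambda>l. l (Suc i)) \<in> borel_measurable ?M" "(\<lambda>l. l i) \<in> borel_measurable ?M"
      using i by (auto intro!: measurable_component_singleton[where M=LL, simplified])
    show "Measurable.pred ?M (\<lambda>l. l (Suc i) < l i)" by measurable
  next
    fix i assume i: "i \<in> {1..p}"
    have [measurable]: "(\<lambda>l. l i) \<in> borel_measurable ?M"
      using i pm by (auto intro!: measurable_component_singleton[where M=LL, simplified])
    show "Measurable.pred ?M (\<lambda>l. 0 < l i)" by measurable
  next
    fix i assume i: "i \<in> {p<..m}"
    have [measurable]: "(\<lambda>l. l i) \<in> borel_measurable ?M"
      using i by (auto intro!: measurable_component_singleton[where M=LL, simplified])
    show "Measurable.pred ?M (\<lambda>l. l i < 0)" by measurable
  qed
  have "Ychamber m p = {l \<in> space ?M. (\<forall>i\<in>{1..<m}. l (Suc i) < l i) \<and> (\<forall>i\<in>{1..p}. 0 < l i) \<and> (\<forall>i\<in>{p<..m}. l i < 0)}"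
    unfolding Ychamber_def space_PiM using pm by auto
  then show ?thesis using P unfolding leb_m_def pred_def by simp
qed

lemma F_meas: assumes "1 \<le> m" shows "(\<lambda>l. \<bar>\<Prod>j\<in>{1..m}. l j\<bar> * vdm m l * exp (- (\<Sum>j\<in>{1..m-1}. l j)) * Gfun c p m (l m)) \<in> borel_measurable (leb_m m)"
proof -
  have comp: "(\<lambda>l. l j) \<in> borel_measurable (PiM {1..m} LL)" if "j \<in> {1..m}" for j
    using that by (auto intro!: measurable_component_singleton[where M=LL, simplified])
  have [measurable]: "(\<lambda>l. l m) \<in> borel_measurable (PiM {1..m} LL)"
    using assms by (intro comp) auto
  have [measurable]: "(\<lambda>x. \<Sum>j\<in>{1..m-1}. x j) \<in> borel_measurable (PiM {1..m} LL)"
    by (intro borel_measurable_sum comp) auto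
  have [measurable]: "(\<lambda>x. \<Prod>j\<in>{1..m}. x j) \<in> borel_measurable (PiM {1..m} LL)"
    by (intro borel_measurable_prod comp) auto
  have [measurable]: "(\<lambda>x. \<Prod>i\<in>{1..m}. \<Prod>j\<in>{i<..m}. x i - x j) \<in> borel_measurable (PiM {1..m} LL)"
    by (intro borel_measurable_prod borel_measurable_diff comp) auto
  show ?thesis unfolding leb_m_def vdm_def Gfun_def
    by measurable
qed



lemma vdm_id:
  assumes m1: "1 \<le> m" and pm: "p \<le> m" and pos: "\<forall>i\<in>{1..m}. 0 < v i"
  shows "\<bar>\<Prod>j\<in>{1..m}. Tab 1 m p v j\<bar> * vdm m (Tab 1 m p v) = (\<Prod>i\<in>{1..m}. \<Prod>j\<in>{i..m}. \<Sum>k\<in>{i..j}. v k)"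
proof -
  let ?l = "Tab 1 m p v"
  let ?X = "Xf m p v"
  let ?z = "\<lambda>k. ?X (tau p k)"
  have lz: "\<And>j. j \<in> {1..m} \<Longrightarrow> ?l j = ?z j" using T_eq pm by (auto simp: tau_def)
  have z0: "?z 0 = 0" by (simp add: tau_def)
  have zmono: "?z j < ?z i" if "i \<in> {1..m}" "j \<in> {1..m}" "i < j" for i j
  proof -
    have "sg p i < sg p j" using that by (intro sg_mono) auto
    moreover have "sg p j \<le> m" using that by (intro sg_le) auto
    ultimately have "?X (sg p j) < ?X (sg p i)" by (intro X_mono[OF pos])
    then show ?thesis using that by (simp add: tau_def)
  qed
  have A: "(\<Prod>j\<in>{1..m}. \<bar>?l j\<bar>) = (\<Prod>j\<in>{1..m}. \<bar>?z 0 - ?z j\<bar>)"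
  proof (rule prod.cong[OF refl])
    fix j assume "j \<in> {1..m}" then show "\<bar>?l j\<bar> = \<bar>?z 0 - ?z j\<bar>" using lz[of j] z0 by simp
  qed
  have B: "(\<Prod>i\<in>{1..m}. \<Prod>j\<in>{i<..m}. ?l i - ?l j) = (\<Prod>i\<in>{1..m}. \<Prod>j\<in>{i<..m}. \<bar>?z i - ?z j\<bar>)"
  proof (rule prod.cong[OF refl], rule prod.cong[OF refl])
    fix i j assume i: "i \<in> {1..m}" and j: "j \<in> {i<..m}"
    then have "?z j < ?z i" by (intro zmono) auto
    then show "?l i - ?l j = \<bar>?z i - ?z j\<bar>" using i j lz[of i] lz[of j] by auto
  qed
  have e0: "{0..m} = insert 0 {1..m}" by auto
  have HZ: "HH ?z {0..m} = (\<Prod>j\<in>{1..m}. \<bar>?z 0 - ?z j\<bar>) * (\<Prod>i\<in>{1..m}. \<Prod>j\<in>{i<..m}. \<bar>?z i - ?z j\<bar>)"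
  proof -
    have "HH ?z {0..m} = (\<Prod>j\<in>{j\<in>{0..m}. 0 < j}. \<bar>?z 0 - ?z j\<bar>) * (\<Prod>i\<in>{1..m}. \<Prod>j\<in>{j\<in>{0..m}. i < j}. \<bar>?z i - ?z j\<bar>)"
      unfolding HH_def e0 by (subst prod.insert) auto
    also have "{j\<in>{0..m}. 0 < j} = {1..m}" by auto
    also have "(\<Prod>i\<in>{1..m}. \<Prod>j\<in>{j\<in>{0..m}. i < j}. \<bar>?z i - ?z j\<bar>) = (\<Prod>i\<in>{1..m}. \<Prod>j\<in>{i<..m}. \<bar>?z i - ?z j\<bar>)"
      by (intro prod.cong refl) auto
    finally show ?thesis .
  qed
  have LHS: "\<bar>\<Prod>j\<in>{1..m}. ?l j\<bar> * vdm m ?l = HH ?z {0..m}"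
    unfolding HZ vdm_def abs_prod A B by simp
  have H2: "(HH ?z {0..m})^2 = (HH ?X {0..m})^2"
    using QQ_reindex[OF tau_inj, of ?X p m] by (simp add: HH_sq tau_img[OF pm])
  have HX: "HH ?z {0..m} = HH ?X {0..m}"
    using H2 by (simp add: HH_def prod_nonneg)
  have HX2: "HH ?X {0..m} = (\<Prod>i\<in>{0..m}. \<Prod>j\<in>{Suc i..m}. \<Sum>k\<in>{Suc i..j}. v k)"
    unfolding HH_def
  proof (rule prod.cong[OF refl])
    fix i assume i: "i \<in> {0..m}"
    have "{j\<in>{0..m}. i < j} = {Suc i..m}" by auto
    moreover have "\<bar>?X i - ?X j\<bar> = (\<Sum>k\<in>{Suc i..j}. v k)" if "j \<in> {Suc i..m}" for j
    proof -
      have "0 \<le> (\<Sum>k\<in>{Suc i..j}. v k)" using pos that by (intro sum_nonneg) (auto simp: less_imp_le)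
      then show ?thesis using X_diff[of i j m p v] that by auto
    qed
    ultimately show "(\<Prod>j\<in>{j\<in>{0..m}. i < j}. \<bar>?X i - ?X j\<bar>) = (\<Prod>j\<in>{Suc i..m}. \<Sum>k\<in>{Suc i..j}. v k)"
      by (auto intro!: prod.cong)
  qed
  obtain m' where m': "m = Suc m'" using m1 by (cases m) auto
  have R: "(\<Prod>i\<in>{0..m}. \<Prod>j\<in>{Suc i..m}. \<Sum>k\<in>{Suc i..j}. v k) = (\<Prod>i\<in>{1..m}. \<Prod>j\<in>{i..m}. \<Sum>k\<in>{i..j}. v k)"
  proof -
    have R1: "(\<Prod>i\<in>{Suc 0..Suc m'}. F i) = (\<Prod>i\<in>{0..m'}. F (Suc i))" for F :: "nat \<Rightarrow> real"
      by (rule prod.shift_bounds_cl_Suc_ivl)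
    have R2: "(\<Prod>i\<in>{0..Suc m'}. G i) = (\<Prod>i\<in>{0..m'}. G i) * G (Suc m')" for G :: "nat \<Rightarrow> real"
      by (rule prod.atLeast0_atMost_Suc)
    show ?thesis
      unfolding m' One_nat_def
      using R1[of "\<lambda>i. \<Prod>j\<in>{i..Suc m'}. \<Sum>k\<in>{i..j}. v k"] R2[of "\<lambda>i. \<Prod>j\<in>{Suc i..Suc m'}. \<Sum>k\<in>{Suc i..j}. v k"]
      by simp
  qed
  show ?thesis using LHS HX HX2 R by simp
qed



lemma sumL:
  assumes pm: "p \<le> m"
  shows "(\<Sum>j\<in>{1..m}. Tab 1 m p v j) = (\<Sum>i\<in>{1..m}. real i * v i) - real (Suc m) * (\<Sum>i\<in>{Suc p..m}. v i)"
proof -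
  let ?X = "Xf m p v"
  have "(\<Sum>k\<in>{0..m}. ?X k) = (\<Sum>k\<in>{0..m}. ?X (tau p k))"
    using sum.reindex[OF tau_inj, of ?X p m] tau_img[OF pm] by simp
  also have "\<dots> = ?X (tau p 0) + (\<Sum>k\<in>{1..m}. ?X (tau p k))"
  proof -
    have "{0..m} = insert 0 {1..m}" by auto
    then show ?thesis by simp
  qed
  also have "\<dots> = (\<Sum>j\<in>{1..m}. Tab 1 m p v j)"
  proof -
    have "(\<Sum>k\<in>{1..m}. ?X (tau p k)) = (\<Sum>j\<in>{1..m}. Tab 1 m p v j)"
    proof (rule sum.cong[OF refl])
      fix k assume k: "k \<in> {1..m}"
      then show "?X (tau p k) = Tab 1 m p v k" using T_eq[OF pm k] by (simp add: tau_def)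
    qed
    then show ?thesis by (simp add: tau_def)
  qed
  finally have 1: "(\<Sum>j\<in>{1..m}. Tab 1 m p v j) = (\<Sum>k\<in>{0..m}. ?X k)" by simp
  have "(\<Sum>k\<in>{0..m}. ?X k) = (\<Sum>k\<in>{0..m}. \<Sum>i\<in>{Suc k..m}. v i) - real (Suc m) * (\<Sum>i\<in>{Suc p..m}. v i)"
    by (simp add: Xf_def sum_subtractf)
  then show ?thesis using 1 D_sum[where m=m and v=v] by simp
qed

lemma exp_id:
  assumes m1: "1 \<le> m" and pm: "p \<le> m"
  shows "exp (- (\<Sum>j\<in>{1..m-1}. Tab 1 m p v j)) * Gfun c p m (Tab 1 m p v m)
       = exp (- (\<Sum>j\<in>{1..p}. real j * v j) - (\<Sum>j\<in>{p+1..m}. (real j + c) * v j))"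
proof -
  let ?l = "Tab 1 m p v"
  define Yp where "Yp = (\<Sum>i\<in>{Suc p..m}. v i)"
  define A where "A = (\<Sum>j\<in>{1..p}. real j * v j)"
  define B where "B = (\<Sum>j\<in>{Suc p..m}. real j * v j)"
  obtain m' where m': "m = Suc m'" using m1 by (cases m) auto
  define S' where "S' = (\<Sum>j\<in>{1..m'}. ?l j)"
  have sAB: "(\<Sum>i\<in>{1..m}. real i * v i) = A + B"
    unfolding A_def B_def by (rule sum_split3) (use pm in auto)
  have sL: "S' + ?l m = A + B - real (Suc m) * Yp"
    using sumL[OF pm, of v] sAB unfolding S'_def Yp_def m' by (simp add: sum.cl_ivl_Suc)
  have sc: "(\<Sum>j\<in>{p+1..m}. (real j + c) * v j) = B + c * Yp"
    unfolding B_def Yp_def by (simp add: algebra_simps sum.distrib sum_distrib_left)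
  have S'd: "(\<Sum>j\<in>{1..m-1}. ?l j) = S'" unfolding S'_def m' by simp
  show ?thesis
  proof (cases "p < m")
    case True
    have lm: "?l m = - Yp"
      using T_eq[OF pm, of m v] True m1 by (simp add: sg_def Xf_def Yp_def)
    have eq: "- S' + (real m + c) * ?l m = - A - (B + c * Yp)"
      using sL lm by (simp add: algebra_simps)
    show ?thesis unfolding S'd sc Gfun_def A_def[symmetric]
      using True eq by (simp add: exp_add[symmetric])
  next
    case False
    then have pm': "p = m" using pm by simp
    have "Yp = 0" "B = 0" unfolding Yp_def B_def pm' by simp_all
    then have eq: "- S' + - ?l m = - A - (B + c * Yp)"
      using sL by (simp add: algebra_simps)
    show ?thesis unfolding S'd sc Gfun_def A_def[symmetric]
      using False eq by (simp add: exp_add[symmetric])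
  qed
qed

lemma cham:
  assumes m1: "1 \<le> m" and pm: "p \<le> m" and v: "v \<in> PiE {1..m} (\<lambda>_. UNIV)"
  shows "Tab 1 m p v \<in> Ychamber m p \<longleftrightarrow> v \<in> PiE {1..m} (\<lambda>_. {0<..})"
proof
  let ?l = "Tab 1 m p v"
  let ?X = "Xf m p v"
  have lX: "\<And>j. j \<in> {1..m} \<Longrightarrow> ?l j = ?X (sg p j)" using T_eq[OF pm] by simp
  have vX: "v k = ?X (k - 1) - ?X k" if "k \<in> {1..m}" for k
    using X_diff[of "k - 1" k m p v] that by simp
  {
    assume Y: "?l \<in> Ychamber m p"
    have c1: "\<And>i. 1 \<le> i \<Longrightarrow> i < m \<Longrightarrow> ?l (Suc i) < ?l i"
      and c2: "\<And>i. 1 \<le> i \<Longrightarrow> i \<le> p \<Longrightarrow> 0 < ?l i"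
      and c3: "\<And>i. p < i \<Longrightarrow> i \<le> m \<Longrightarrow> ?l i < 0"
      using Y unfolding Ychamber_def by auto
    have "0 < v k" if k: "k \<in> {1..m}" for k
    proof -
      consider "k < p" | "k = p" | "k = Suc p" | "Suc p < k" by linarith
      then show ?thesis
      proof cases
        case 1
        have "?X (k - 1) = ?l k" using lX[of k] k 1 by (simp add: sg_def)
        moreover have "?X k = ?l (Suc k)" using lX[of "Suc k"] k 1 pm by (simp add: sg_def)
        moreover have "?l (Suc k) < ?l k" using c1[of k] k 1 pm by simp
        ultimately show ?thesis using vX[OF k] by simp
      next
        case 2
        have "?X (k - 1) = ?l k" using lX[of k] k 2 by (simp add: sg_def)
        moreover have "0 < ?l k" using c2[of k] k 2 by simp
        ultimately show ?thesis using vX[OF k] 2 by simp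
      next
        case 3
        have "?X k = ?l k" using lX[of k] k 3 by (simp add: sg_def)
        moreover have "?l k < 0" using c3[of k] k 3 by simp
        ultimately show ?thesis using vX[OF k] 3 by simp
      next
        case 4
        have k1: "k - 1 \<in> {1..m}" "sg p (k - 1) = k - 1" using k 4 by (auto simp: sg_def)
        have "?X (k - 1) = ?l (k - 1)" using lX[OF k1(1)] k1(2) by simp
        moreover have "?X k = ?l k" using lX[of k] k 4 by (simp add: sg_def)
        moreover have "?l k < ?l (k - 1)" using c1[of "k - 1"] k 4 by simp
        ultimately show ?thesis using vX[OF k] by simp
      qed
    qed
    then show "v \<in> PiE {1..m} (\<lambda>_. {0<..})" using v by (auto simp: PiE_iff)
  }
  {
    assume "v \<in> PiE {1..m} (\<lambda>_. {0<..})"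
    then have pos: "\<forall>i\<in>{1..m}. 0 < v i" by (auto simp: PiE_iff)
    have "?l \<in> PiE {1..m} (\<lambda>_. UNIV)" by (simp add: Tab_def)
    moreover have "?l (Suc i) < ?l i" if "1 \<le> i" "i < m" for i
      using lX[of i] lX[of "Suc i"] that X_mono[OF pos, of "sg p i" "sg p (Suc i)"] sg_mono[of i "Suc i" p] sg_le[of "Suc i" m p]
      by simp
    moreover have "0 < ?l i" if "1 \<le> i" "i \<le> p" for i
      using lX[of i] that pm X_mono[OF pos, where k="i - 1" and l=p and p=p] by (simp add: sg_def)
    moreover have "?l i < 0" if "p < i" "i \<le> m" for i
      using lX[of i] that X_mono[OF pos, where k=p and l=i and p=p] by (simp add: sg_def)
    ultimately show "?l \<in> Ychamber m p" unfolding Ychamber_def by auto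
  }
qed



theorem mainTheorem7:
  fixes m p :: nat and c :: real
  assumes "1 \<le> m" and "p \<le> m" and "0 \<le> c"
  shows "Pcp c p m =
    (LINT l : PiE {1..m} (\<lambda>_. {0<..}) | leb_m m.
       (\<Prod>i\<in>{1..m}. \<Prod>j\<in>{i..m}. \<Sum>k\<in>{i..j}. l k) *
       exp (- (\<Sum>j\<in>{1..p}. real j * l j) - (\<Sum>j\<in>{p+1..m}. (real j + c) * l j)))"
proof -
  note m1 = assms(1) and pm = assms(2)
  let ?M = "leb_m m"
  let ?T = "Tab 1 m p"
  let ?Y = "Ychamber m p"
  let ?B = "PiE {1..m} (\<lambda>_. {0<..}) :: (nat \<Rightarrow> real) set"
  let ?F = "\<lambda>l. \<bar>\<Prod>j\<in>{1..m}. l j\<bar> * vdm m l * exp (- (\<Sum>j\<in>{1..m-1}. l j)) * Gfun c p m (l m)"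
  let ?G = "\<lambda>l::nat\<Rightarrow>real. (\<Prod>i\<in>{1..m}. \<Prod>j\<in>{i..m}. \<Sum>k\<in>{i..j}. l k) *
       exp (- (\<Sum>j\<in>{1..p}. real j * l j) - (\<Sum>j\<in>{p+1..m}. (real j + c) * l j))"
  have Tm: "?T \<in> measurable ?M ?M" and Td: "distr ?M ?M ?T = ?M"
    using Tab_pres[of 1 p m] assms unfolding leb_m_def by auto
  have gm: "(\<lambda>l. indicator ?Y l *\<^sub>R ?F l) \<in> borel_measurable ?M"
    by (intro borel_measurable_scaleR borel_measurable_indicator Ych_meas[OF pm] F_meas[OF m1])
  have "Pcp c p m = integral\<^sup>L ?M (\<lambda>l. indicator ?Y l *\<^sub>R ?F l)"
    unfolding Pcp_def set_lebesgue_integral_def by simp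
  also have "\<dots> = integral\<^sup>L (distr ?M ?M ?T) (\<lambda>l. indicator ?Y l *\<^sub>R ?F l)"
    by (simp only: Td)
  also have "\<dots> = integral\<^sup>L ?M (\<lambda>v. indicator ?Y (?T v) *\<^sub>R ?F (?T v))"
    by (rule integral_distr[OF Tm gm])
  also have "\<dots> = integral\<^sup>L ?M (\<lambda>v. indicator ?B v *\<^sub>R ?G v)"
  proof (rule Bochner_Integration.integral_cong[OF refl])
    fix v assume v: "v \<in> space ?M"
    then have v': "v \<in> PiE {1..m} (\<lambda>_. UNIV)" by (simp add: leb_m_def space_PiM)
    note ch = cham[OF m1 pm v']
    show "indicator ?Y (?T v) *\<^sub>R ?F (?T v) = indicator ?B v *\<^sub>R ?G v"
    proof (cases "v \<in> ?B")
      case True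
      then have pos: "\<forall>i\<in>{1..m}. 0 < v i" by (auto simp: PiE_iff)
      have inY: "?T v \<in> ?Y" using ch True by simp
      have "?F (?T v) = (\<bar>\<Prod>j\<in>{1..m}. ?T v j\<bar> * vdm m (?T v)) *
          (exp (- (\<Sum>j\<in>{1..m-1}. ?T v j)) * Gfun c p m (?T v m))"
        by (simp only: mult.assoc)
      also have "\<dots> = ?G v" unfolding vdm_id[OF m1 pm pos] exp_id[OF m1 pm] ..
      finally show ?thesis using True inY by simp
    next
      case False
      then have "?T v \<notin> ?Y" using ch by simp
      then show ?thesis using False by simp
    qed
  qed
  also have "\<dots> = (LINT l : ?B | ?M. ?G l)"
    unfolding set_lebesgue_integral_def by simp
  finally show ?thesis .
qed


end
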